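(* For the revision operator $\mathsf{OGI}$: (a) postulate $(P^*1)$ fails in general: there exist $W$, a distance $d$, an observation function $O$, a belief state $b$ and a satisfiable $\alpha$ (which is weakly observable) such that $b\,\mathsf{OGI}\,\alpha$ is not a belief state; (b) if $\alpha$ is strongly observable, then for every belief state $b$, $b\,\mathsf{OGI}\,\alpha$ is a belief state if and only if $\alpha$ is satisfiable.
   Context: $W$ is the finite set of worlds of a finite propositional language $L$; $\|\alpha\|$ the set of $\alpha$-worlds. A belief state is a probability distribution $b$ on $W$. $d$ is a distance on worlds satisfying $d(w,w)<d(v,w)$ for all $v\neq w$. $\mathit{Min}(\alpha,w,d):=\{w'\in\|\alpha\|:\forall w''\in\|\alpha\|,\ d(w',w)\le d(w'',w)\}$. Generalized imaging: $(b\,\mathsf{GI}\,\alpha)(w)=0$ if $w\notin\|\alpha\|$, else $(b\,\mathsf{GI}\,\alpha)(w)=\sum_{w'\in W:\,w\in\mathit{Min}(\alpha,w',d)}b(w')/|\mathit{Min}(\alpha,w',d)|$. With an observation function $O:L\times W\to[0,1]$, $(b\,\mathsf{OGI}\,\alpha)(w)=\frac{O(\alpha,w)(b\,\mathsf{GI}\,\alpha)(w)}{\sum_{w'}O(\alpha,w')(b\,\mathsf{GI}\,\alpha)(w')}$, which is a belief state iff the denominator is positive and undefined otherwise. $\alpha$ is weakly observable iff some $w\models\alpha$ has $O(\alpha,w)>0$; strongly observable iff $O(\alpha,w)>0$ for all $w\models\alpha$. *)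

theory Defs
  imports Complex_Main
begin

datatype 'a form =
    Atom 'a | Top | Bot | Neg "'a form" | Conj "'a form" "'a form"
  | Disj "'a form" "'a form" | Imp "'a form" "'a form"

fun sat :: "('a \<Rightarrow> bool) \<Rightarrow> 'a form \<Rightarrow> bool" where
  "sat w (Atom p) = w p"
| "sat w Top = True"
| "sat w Bot = False"
| "sat w (Neg f) = (\<not> sat w f)"
| "sat w (Conj f g) = (sat w f \<and> sat w g)"
| "sat w (Disj f g) = (sat w f \<or> sat w g)"
| "sat w (Imp f g) = (sat w f \<longrightarrow> sat w g)"

definition mods :: "'a form \<Rightarrow> ('a \<Rightarrow> bool) set" where
  "mods \<alpha> = {w. sat w \<alpha>}"

definition satisfiable :: "'a form \<Rightarrow> bool" where
  "satisfiable \<alpha> \<longleftrightarrow> mods \<alpha> \<noteq> {}"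

definition belief_state :: "(('a::finite \<Rightarrow> bool) \<Rightarrow> real) \<Rightarrow> bool" where
  "belief_state b \<longleftrightarrow> (\<forall>w. 0 \<le> b w) \<and> (\<Sum>w\<in>UNIV. b w) = 1"

definition is_distance :: "(('a \<Rightarrow> bool) \<Rightarrow> ('a \<Rightarrow> bool) \<Rightarrow> real) \<Rightarrow> bool" where
  "is_distance d \<longleftrightarrow> (\<forall>v w. v \<noteq> w \<longrightarrow> d w w < d v w)"

definition is_obs_fun :: "('a form \<Rightarrow> ('a \<Rightarrow> bool) \<Rightarrow> real) \<Rightarrow> bool" where
  "is_obs_fun Ob \<longleftrightarrow> (\<forall>\<alpha> w. 0 \<le> Ob \<alpha> w \<and> Ob \<alpha> w \<le> 1)"

definition Min_set :: "'a form \<Rightarrow> ('a \<Rightarrow> bool) \<Rightarrow> (('a \<Rightarrow> bool) \<Rightarrow> ('a \<Rightarrow> bool) \<Rightarrow> real)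
    \<Rightarrow> ('a \<Rightarrow> bool) set" where
  "Min_set \<alpha> w d = {w' \<in> mods \<alpha>. \<forall>w'' \<in> mods \<alpha>. d w' w \<le> d w'' w}"

definition GI :: "(('a \<Rightarrow> bool) \<Rightarrow> ('a \<Rightarrow> bool) \<Rightarrow> real) \<Rightarrow> (('a::finite \<Rightarrow> bool) \<Rightarrow> real)
    \<Rightarrow> 'a form \<Rightarrow> ('a \<Rightarrow> bool) \<Rightarrow> real" where
  "GI d b \<alpha> w = (if w \<notin> mods \<alpha> then 0
     else (\<Sum>w'\<in>{w'. w \<in> Min_set \<alpha> w' d}. b w' / real (card (Min_set \<alpha> w' d))))"

definition OGI :: "(('a \<Rightarrow> bool) \<Rightarrow> ('a \<Rightarrow> bool) \<Rightarrow> real) \<Rightarrow> ('a form \<Rightarrow> ('a \<Rightarrow> bool) \<Rightarrow> real)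
    \<Rightarrow> (('a::finite \<Rightarrow> bool) \<Rightarrow> real) \<Rightarrow> 'a form \<Rightarrow> (('a \<Rightarrow> bool) \<Rightarrow> real) option" where
  "OGI d Ob b \<alpha> =
    (let D = (\<Sum>w'\<in>UNIV. Ob \<alpha> w' * GI d b \<alpha> w')
     in if D > 0 then Some (\<lambda>w. Ob \<alpha> w * GI d b \<alpha> w / D) else None)"

definition OGI_is_belief_state :: "(('a \<Rightarrow> bool) \<Rightarrow> ('a \<Rightarrow> bool) \<Rightarrow> real) \<Rightarrow> ('a form \<Rightarrow> ('a \<Rightarrow> bool) \<Rightarrow> real)
    \<Rightarrow> (('a::finite \<Rightarrow> bool) \<Rightarrow> real) \<Rightarrow> 'a form \<Rightarrow> bool" where
  "OGI_is_belief_state d Ob b \<alpha> \<longleftrightarrow> (\<exists>b'. OGI d Ob b \<alpha> = Some b' \<and> belief_state b')"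

definition weakly_observable :: "('a form \<Rightarrow> ('a \<Rightarrow> bool) \<Rightarrow> real) \<Rightarrow> 'a form \<Rightarrow> bool" where
  "weakly_observable Ob \<alpha> \<longleftrightarrow> (\<exists>w. sat w \<alpha> \<and> Ob \<alpha> w > 0)"

definition strongly_observable :: "('a form \<Rightarrow> ('a \<Rightarrow> bool) \<Rightarrow> real) \<Rightarrow> 'a form \<Rightarrow> bool" where
  "strongly_observable Ob \<alpha> \<longleftrightarrow> (\<forall>w. sat w \<alpha> \<longrightarrow> Ob \<alpha> w > 0)"

end

theory Submission
  imports Defs
begin

lemma Min_set_ne:
  fixes \<alpha> :: "'a::finite form"
  assumes "satisfiable \<alpha>"
  shows "Min_set \<alpha> w d \<noteq> {}"
proof -
  let ?S = "mods \<alpha>"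
  have fin: "finite ((\<lambda>x. d x w) ` ?S)" by simp
  have ne: "(\<lambda>x. d x w) ` ?S \<noteq> {}" using assms by (simp add: satisfiable_def)
  have "Min ((\<lambda>x. d x w) ` ?S) \<in> (\<lambda>x. d x w) ` ?S" using Min_in[OF fin ne] .
  then obtain x where x: "x \<in> ?S" "d x w = Min ((\<lambda>x. d x w) ` ?S)" by auto
  have "\<forall>y\<in>?S. d x w \<le> d y w" using x(2) fin by auto
  with x(1) show ?thesis unfolding Min_set_def by blast
qed

lemma GI_alt:
  fixes b :: "('a::finite \<Rightarrow> bool) \<Rightarrow> real"
  shows "GI d b \<alpha> w = (\<Sum>w'\<in>UNIV. if w \<in> Min_set \<alpha> w' d then b w' / real (card (Min_set \<alpha> w' d)) else 0)"
proof (cases "w \<in> mods \<alpha>")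
  case True
  then show ?thesis unfolding GI_def
    by (simp add: sum.If_cases Int_def)
next
  case False
  then have "\<forall>w'. w \<notin> Min_set \<alpha> w' d" unfolding Min_set_def by auto
  then show ?thesis using False unfolding GI_def by simp
qed

lemma GI_nonneg:
  fixes b :: "('a::finite \<Rightarrow> bool) \<Rightarrow> real"
  assumes "belief_state b"
  shows "0 \<le> GI d b \<alpha> w"
  unfolding GI_alt using assms unfolding belief_state_def
  by (intro sum_nonneg) auto

lemma GI_sum:
  fixes b :: "('a::finite \<Rightarrow> bool) \<Rightarrow> real"
  assumes "belief_state b" "satisfiable \<alpha>"
  shows "(\<Sum>w\<in>UNIV. GI d b \<alpha> w) = 1"
proof -
  have "(\<Sum>w\<in>UNIV. GI d b \<alpha> w) = (\<Sum>w'\<in>UNIV. \<Sum>w\<in>UNIV. if w \<in> Min_set \<alpha> w' d then b w' / real (card (Min_set \<alpha> w' d)) else 0)"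
    unfolding GI_alt by (rule sum.swap)
  also have "\<dots> = (\<Sum>w'\<in>UNIV. b w')"
  proof (rule sum.cong[OF refl])
    fix w'
    have ne: "Min_set \<alpha> w' d \<noteq> {}" using Min_set_ne[OF assms(2)] .
    have c: "card (Min_set \<alpha> w' d) > 0" using ne by (simp add: card_gt_0_iff)
    have "(\<Sum>w\<in>UNIV. if w \<in> Min_set \<alpha> w' d then b w' / real (card (Min_set \<alpha> w' d)) else 0)
        = (\<Sum>w\<in>Min_set \<alpha> w' d. b w' / real (card (Min_set \<alpha> w' d)))"
      by (simp add: sum.If_cases)
    also have "\<dots> = b w'" using c ne by simp
    finally show "(\<Sum>w\<in>UNIV. if w \<in> Min_set \<alpha> w' d then b w' / real (card (Min_set \<alpha> w' d)) else 0) = b w'" .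
  qed
  also have "\<dots> = 1" using assms(1) unfolding belief_state_def by simp
  finally show ?thesis .
qed

lemma partb:
  fixes d :: "('a::finite \<Rightarrow> bool) \<Rightarrow> ('a \<Rightarrow> bool) \<Rightarrow> real" and \<alpha> :: "'a form"
  assumes obs: "is_obs_fun Ob" and so: "strongly_observable Ob \<alpha>" and b: "belief_state b"
  shows "OGI_is_belief_state d Ob b \<alpha> \<longleftrightarrow> satisfiable \<alpha>"
proof
  assume h: "OGI_is_belief_state d Ob b \<alpha>"
  show "satisfiable \<alpha>"
  proof (rule ccontr)
    assume "\<not> satisfiable \<alpha>"
    then have "\<forall>w. GI d b \<alpha> w = 0" unfolding satisfiable_def GI_def by auto
    then show False using h unfolding OGI_is_belief_state_def OGI_def by simp
  qed
next
  assume s: "satisfiable \<alpha>"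
  let ?D = "\<Sum>w'\<in>UNIV. Ob \<alpha> w' * GI d b \<alpha> w'"
  have gnn: "\<And>w. 0 \<le> GI d b \<alpha> w" using GI_nonneg[OF b] .
  have onn: "\<And>w. 0 \<le> Ob \<alpha> w" using obs unfolding is_obs_fun_def by auto
  obtain w where gw: "GI d b \<alpha> w > 0"
  proof (rule ccontr)
    assume na: "\<not> thesis"
    have "\<forall>w. GI d b \<alpha> w = 0"
    proof
      fix w
      have "\<not> GI d b \<alpha> w > 0" using na that by blast
      then show "GI d b \<alpha> w = 0" using gnn[of w] by linarith
    qed
    then show False using GI_sum[OF b s, of d] by simp
  qed
  then have "w \<in> mods \<alpha>" unfolding GI_def by (auto split: if_splits)
  then have ow: "Ob \<alpha> w > 0" using so unfolding strongly_observable_def mods_def by auto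
  have "Ob \<alpha> w * GI d b \<alpha> w \<le> ?D"
    by (rule member_le_sum) (auto intro: mult_nonneg_nonneg onn gnn)
  moreover have "Ob \<alpha> w * GI d b \<alpha> w > 0" using ow gw by simp
  ultimately have Dp: "?D > 0" by linarith
  have "belief_state (\<lambda>w. Ob \<alpha> w * GI d b \<alpha> w / ?D)"
    unfolding belief_state_def
  proof
    show "\<forall>w. 0 \<le> Ob \<alpha> w * GI d b \<alpha> w / ?D" using Dp onn gnn by simp
    show "(\<Sum>w\<in>UNIV. Ob \<alpha> w * GI d b \<alpha> w / ?D) = 1"
      using Dp by (simp add: sum_divide_distrib[symmetric])
  qed
  then show "OGI_is_belief_state d Ob b \<alpha>"
    unfolding OGI_is_belief_state_def OGI_def Let_def using Dp by simp
qed

lemma parta: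
  "\<exists>(d :: (bool \<Rightarrow> bool) \<Rightarrow> (bool \<Rightarrow> bool) \<Rightarrow> real) Ob b (\<alpha> :: bool form).
            is_distance d \<and> is_obs_fun Ob \<and> belief_state b \<and> satisfiable \<alpha> \<and>
            weakly_observable Ob \<alpha> \<and> \<not> OGI_is_belief_state d Ob b \<alpha>"
proof -
  define d :: "(bool \<Rightarrow> bool) \<Rightarrow> (bool \<Rightarrow> bool) \<Rightarrow> real" where "d = (\<lambda>v w. if v = w then 0 else 1)"
  define Ob :: "bool form \<Rightarrow> (bool \<Rightarrow> bool) \<Rightarrow> real" where "Ob = (\<lambda>\<alpha> w. if w = (\<lambda>_. False) then 1 else 0)"
  define b :: "(bool \<Rightarrow> bool) \<Rightarrow> real" where "b = (\<lambda>w. if w = (\<lambda>_. True) then 1 else 0)"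
  have ms: "\<And>w'. Min_set Top w' d = {w'}"
    unfolding Min_set_def mods_def d_def by auto
  have gi: "\<And>w. GI d b Top w = b w"
    unfolding GI_def by (simp add: ms mods_def)
  have ne: "(\<lambda>_::bool. True) \<noteq> (\<lambda>_. False)" by (metis)
  have "\<forall>w. Ob Top w * GI d b Top w = 0"
  proof
    fix w show "Ob Top w * GI d b Top w = 0"
      unfolding gi by (cases "w = (\<lambda>_. False)") (use ne in \<open>auto simp: Ob_def b_def\<close>)
  qed
  then have z: "(\<Sum>w'\<in>UNIV. Ob Top w' * GI d b Top w') = 0" by (intro sum.neutral) blast
  have nb: "\<not> OGI_is_belief_state d Ob b Top"
    unfolding OGI_is_belief_state_def OGI_def Let_def z by simp
  have bs: "belief_state b" unfolding belief_state_def b_def by simp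
  have "is_distance d" unfolding is_distance_def d_def by simp
  moreover have "is_obs_fun Ob" unfolding is_obs_fun_def Ob_def by simp
  moreover have "satisfiable (Top :: bool form)" unfolding satisfiable_def mods_def by simp
  moreover have "weakly_observable Ob Top" unfolding weakly_observable_def Ob_def by auto
  ultimately show ?thesis using nb bs by blast
qed

theorem proposition8:
  shows "(\<exists>(d :: (bool \<Rightarrow> bool) \<Rightarrow> (bool \<Rightarrow> bool) \<Rightarrow> real) Ob b (\<alpha> :: bool form).
            is_distance d \<and> is_obs_fun Ob \<and> belief_state b \<and> satisfiable \<alpha> \<and>
            weakly_observable Ob \<alpha> \<and> \<not> OGI_is_belief_state d Ob b \<alpha>)
       \<and> (\<forall>(d :: ('a::finite \<Rightarrow> bool) \<Rightarrow> ('a \<Rightarrow> bool) \<Rightarrow> real) Ob (\<alpha> :: 'a form).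
            is_distance d \<and> is_obs_fun Ob \<and> strongly_observable Ob \<alpha> \<longrightarrow>
            (\<forall>b. belief_state b \<longrightarrow> (OGI_is_belief_state d Ob b \<alpha> \<longleftrightarrow> satisfiable \<alpha>)))"
  using parta partb by blast

end
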